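(* Let $\mathcal C$ be a $k$-coloured operad (in the sense of the context). Then the enveloping operad $\mathrm{Env}(\mathcal C)$ is isomorphic to the operad $\mathrm{AC}(\mathcal C^+)$ of anticoloured syntax trees on $\mathcal C^+$. (Under the isomorphism, each $\equiv$-class of syntax trees on $\bar{\mathcal C}$ is sent to the unique anticoloured syntax tree it contains.)
   Context: All operads are nonsymmetric operads in the category of sets. Fix $k\ge 1$ and write $[k]=\{1,\dots,k\}$. A $k$-coloured operad $\mathcal C=\biguplus_{n\ge1}\mathcal C(n)$ assigns to each $x\in\mathcal C(n)$ an output colour $\mathrm{Out}(x)\in[k]$ and input colours $\mathrm{In}_1(x),\dots,\mathrm{In}_n(x)\in[k]$. It has partial compositions $x\circ_i y\in\mathcal C(n+m-1)$, for $x\in\mathcal C(n)$, $y\in\mathcal C(m)$ and $i\in[n]$, which are defined exactly when $\mathrm{Out}(y)=\mathrm{In}_i(x)$. The composite has output colour $\mathrm{Out}(x)$ and input colours $\mathrm{In}_1(x),\dots,\mathrm{In}_{i-1}(x),\mathrm{In}_1(y),\dots,\mathrm{In}_m(y),\mathrm{In}_{i+1}(x),\dots,\mathrm{In}_n(x)$. These compositions satisfy the usual associativity and unit axioms of coloured operads. It is assumed that $\mathcal C(1)=\{\mathbf 1_c : c\in[k]\}$, where $\mathbf 1_c$ is a unit with output and input colour $c$, and that each $\mathcal C(n)$ is finite. An (uncoloured) operad is a $1$-coloured operad. Let $\mathcal C^+=\mathcal C\setminus\mathcal C(1)$, and let $\bar{\mathcal C}$ be the same graded set with all colours forgotten, i.e.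 all colours set to $1$. The enveloping operad $\mathrm{Env}(\mathcal C)$ is the quotient of the free uncoloured operad on $\bar{\mathcal C}$ (whose elements are planar rooted syntax trees with nodes of arity $\ell$ labelled by elements of $\mathcal C(\ell)$, composed by grafting) by the smallest operadic congruence $\equiv$ such that $\mathfrak c(x)\circ_i\mathfrak c(y)\equiv\mathfrak c(x\circ_i y)$ for all $x,y\in\mathcal C^+$ with $x\circ_i y$ defined in $\mathcal C$. Here $\mathfrak c(x)$ denotes the corolla, i.e. the tree with a single internal node labelled $x$. An anticoloured syntax tree on $\mathcal C^+$ is a planar rooted tree whose internal nodes of arity $\ell$ are labelled by elements of $\mathcal C(\ell)$, $\ell\ge2$, such that whenever an internal node $s$ labelled $y$ is the $i$th child of an internal node $r$ labelled $x$, one has $\mathrm{In}_i(x)\ne\mathrm{Out}(y)$. The set $\mathrm{AC}(\mathcal C^+)$ of such trees, with the one-leaf tree as unit, is an operad with the following composition. For trees $S,T$ and a leaf index $i$ of $S$, let $r$ be the parent node of the $i$th leaf of $S$, let that leaf be the $j$th child of $r$, and let $s$ be the root of $T$. Then $S\circ_i T$ is obtained by grafting the root of $T$ on the $i$th leaf of $S$. If moreover $\mathrm{Out}(T)=\mathrm{In}_j(r)$, one then replaces the two nodes $r$ (label $x$) and $s$ (label $y$) by a single node labelled $x\circ_j y$. *)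

theory Defs
  imports Main
begin

record 'a col_operad =
  elems :: "'a set"                    (* the graded set C, all arities together *)
  arity :: "'a \<Rightarrow> nat"
  outc  :: "'a \<Rightarrow> nat"
  inc   :: "'a \<Rightarrow> nat \<Rightarrow> nat"         (* inc C x i = In_i(x), i in {1..arity x} *)
  pcomp :: "'a \<Rightarrow> nat \<Rightarrow> 'a \<Rightarrow> 'a"    (* pcomp C x i y = x o_i y (meaningful when defined) *)
  unit  :: "nat \<Rightarrow> 'a"

definition coloured_operad :: "nat \<Rightarrow> 'a col_operad \<Rightarrow> bool" where
  "coloured_operad k C \<longleftrightarrow>
     k \<ge> 1 \<and>
     \<comment> \<open>grading and colours\<close>
     (\<forall>x\<in>elems C. arity C x \<ge> 1 \<and> outc C x \<in> {1..k} \<and>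
                   (\<forall>i\<in>{1..arity C x}. inc C x i \<in> {1..k})) \<and>
     \<comment> \<open>partial composition, defined when Out(y) = In_i(x)\<close>
     (\<forall>x\<in>elems C. \<forall>y\<in>elems C. \<forall>i\<in>{1..arity C x}. outc C y = inc C x i \<longrightarrow>
        pcomp C x i y \<in> elems C \<and>
        arity C (pcomp C x i y) = arity C x + arity C y - 1 \<and>
        outc C (pcomp C x i y) = outc C x \<and>
        (\<forall>p\<in>{1..arity C x + arity C y - 1}.
           inc C (pcomp C x i y) p =
             (if p < i then inc C x p
              else if p < i + arity C y then inc C y (p - i + 1)
              else inc C x (p - arity C y + 1)))) \<and>
     \<comment> \<open>sequential associativity\<close>
     (\<forall>x\<in>elems C. \<forall>y\<in>elems C. \<forall>z\<in>elems C. \<forall>i\<in>{1..arity C x}. \<forall>j\<in>{1..arity C y}.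
        outc C y = inc C x i \<longrightarrow> outc C z = inc C y j \<longrightarrow>
        pcomp C x i (pcomp C y j z) = pcomp C (pcomp C x i y) (i + j - 1) z) \<and>
     \<comment> \<open>parallel associativity\<close>
     (\<forall>x\<in>elems C. \<forall>y\<in>elems C. \<forall>z\<in>elems C. \<forall>i j. 1 \<le> i \<longrightarrow> i < j \<longrightarrow> j \<le> arity C x \<longrightarrow>
        outc C y = inc C x i \<longrightarrow> outc C z = inc C x j \<longrightarrow>
        pcomp C (pcomp C x i y) (j + arity C y - 1) z = pcomp C (pcomp C x j z) i y) \<and>
     \<comment> \<open>units\<close>
     (\<forall>c\<in>{1..k}. unit C c \<in> elems C \<and> arity C (unit C c) = 1 \<and>
                  outc C (unit C c) = c \<and> inc C (unit C c) 1 = c) \<and>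
     (\<forall>x\<in>elems C. pcomp C (unit C (outc C x)) 1 x = x) \<and>
     (\<forall>x\<in>elems C. \<forall>i\<in>{1..arity C x}. pcomp C x i (unit C (inc C x i)) = x) \<and>
     \<comment> \<open>C(1) consists exactly of the units, and each C(n) is finite\<close>
     {x\<in>elems C. arity C x = 1} = unit C ` {1..k} \<and>
     (\<forall>n. finite {x\<in>elems C. arity C x = n})"

datatype 'a tree = Leaf | Node 'a "'a tree list"

fun nlv :: "'a tree \<Rightarrow> nat" where
  "nlv Leaf = 1"
| "nlv (Node x ts) = sum_list (map nlv ts)"

text \<open>Syntax trees on the uncoloured set of elements of arity at least 2 (C^+).\<close>
fun stree :: "'a col_operad \<Rightarrow> 'a tree \<Rightarrow> bool" where
  "stree C Leaf = True"
| "stree C (Node x ts) \<longleftrightarrow> x \<in> elems C \<and> arity C x \<ge> 2 \<and> length ts = arity C x \<and>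
                            (\<forall>t\<in>set ts. stree C t)"

text \<open>Grafting (composition in the free operad): the root of T is grafted on
  the i-th leaf (leaves numbered from 1, left to right) of S.\<close>
fun graft :: "'a tree \<Rightarrow> nat \<Rightarrow> 'a tree \<Rightarrow> 'a tree"
and graft_list :: "'a tree list \<Rightarrow> nat \<Rightarrow> 'a tree \<Rightarrow> 'a tree list" where
  "graft Leaf i T = (if i = 1 then T else Leaf)"
| "graft (Node x ts) i T = Node x (graft_list ts i T)"
| "graft_list [] i T = []"
| "graft_list (t # ts) i T =
     (if i \<le> nlv t then graft t i T # ts else t # graft_list ts (i - nlv t) T)"

definition corolla :: "'a col_operad \<Rightarrow> 'a \<Rightarrow> 'a tree" where
  "corolla C x = Node x (replicate (arity C x) Leaf)"

inductive env_eq :: "'a col_operad \<Rightarrow> 'a tree \<Rightarrow> 'a tree \<Rightarrow> bool" for C where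
  gen: "\<lbrakk>x \<in> elems C; arity C x \<ge> 2; y \<in> elems C; arity C y \<ge> 2; i \<in> {1..arity C x};
         outc C y = inc C x i\<rbrakk>
        \<Longrightarrow> env_eq C (graft (corolla C x) i (corolla C y)) (corolla C (pcomp C x i y))"
| refl: "stree C S \<Longrightarrow> env_eq C S S"
| sym: "env_eq C S T \<Longrightarrow> env_eq C T S"
| trans: "env_eq C S T \<Longrightarrow> env_eq C T U \<Longrightarrow> env_eq C S U"
| cong: "env_eq C S S' \<Longrightarrow> env_eq C T T' \<Longrightarrow> i \<in> {1..nlv S}
         \<Longrightarrow> env_eq C (graft S i T) (graft S' i T')"

definition env_class :: "'a col_operad \<Rightarrow> 'a tree \<Rightarrow> 'a tree set" where
  "env_class C S = {T. env_eq C S T}"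

definition Env :: "'a col_operad \<Rightarrow> 'a tree set set" where
  "Env C = env_class C ` {S. stree C S}"

fun anticol :: "'a col_operad \<Rightarrow> 'a tree \<Rightarrow> bool" where
  "anticol C Leaf = True"
| "anticol C (Node x ts) \<longleftrightarrow> x \<in> elems C \<and> arity C x \<ge> 2 \<and> length ts = arity C x \<and>
     (\<forall>t\<in>set ts. anticol C t) \<and>
     (\<forall>j < length ts. \<forall>y us. ts ! j = Node y us \<longrightarrow> inc C x (j + 1) \<noteq> outc C y)"

definition AC :: "'a col_operad \<Rightarrow> 'a tree set" where
  "AC C = {T. anticol C T}"

text \<open>Composition in AC(C^+): graft T on the i-th leaf of S; if that leaf is the
  j-th child of a node r labelled x and T has root label y with Out(y) = In_j(x),
  merge r and the root of T into a node labelled x o_j y.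
  The helper ac_comp_list C x j pre ts i T processes the children ts of a node
  labelled x, j being the position of the first child of ts and pre the already
  processed children.\<close>
fun ac_comp :: "'a col_operad \<Rightarrow> 'a tree \<Rightarrow> nat \<Rightarrow> 'a tree \<Rightarrow> 'a tree"
and ac_comp_list :: "'a col_operad \<Rightarrow> 'a \<Rightarrow> nat \<Rightarrow> 'a tree list \<Rightarrow> 'a tree list
                      \<Rightarrow> nat \<Rightarrow> 'a tree \<Rightarrow> 'a tree" where
  "ac_comp C Leaf i T = (if i = 1 then T else Leaf)"
| "ac_comp C (Node x ts) i T = ac_comp_list C x 1 [] ts i T"
| "ac_comp_list C x j pre [] i T = Node x pre"
| "ac_comp_list C x j pre (t # ts) i T =
     (if i \<le> nlv t then
        (case t of
           Leaf \<Rightarrow> (case T of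
                      Leaf \<Rightarrow> Node x (pre @ Leaf # ts)
                    | Node y us \<Rightarrow>
                        (if outc C y = inc C x j
                         then Node (pcomp C x j y) (pre @ us @ ts)
                         else Node x (pre @ T # ts)))
         | Node _ _ \<Rightarrow> Node x (pre @ ac_comp C t i T # ts))
      else ac_comp_list C x (j + 1) (pre @ [t]) ts (i - nlv t) T)"

end

theory Submission imports Defs begin

abbreviation nlvs :: "'a tree list \<Rightarrow> nat" where "nlvs ts \<equiv> sum_list (map nlv ts)"

lemma gl_pre: "1 \<le> q \<Longrightarrow> graft_list (pre @ rest) (nlvs pre + q) T = pre @ graft_list rest q T"
  by (induction pre) auto

lemma gl_in: "1 \<le> i \<Longrightarrow> i \<le> nlvs pre \<Longrightarrow> graft_list (pre @ rest) i T = graft_list pre i T @ rest"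
  by (induction pre arbitrary: i) auto

lemma gl_len: "length (graft_list ts i T) = length ts"
  by (induction ts arbitrary: i) auto

lemma nlv_graft: "1 \<le> i \<Longrightarrow> i \<le> nlv S \<Longrightarrow> nlv (graft S i T) = nlv S + nlv T - 1"
  and "1 \<le> i \<Longrightarrow> i \<le> nlvs ts \<Longrightarrow> nlvs (graft_list ts i T) = nlvs ts + nlv T - 1"
  by (induction S i T and ts i T rule: graft_graft_list.induct) auto

lemma idx_split: "1 \<le> i \<Longrightarrow> i \<le> nlvs ts \<Longrightarrow>
  \<exists>pre t post q. ts = pre @ t # post \<and> i = nlvs pre + q \<and> 1 \<le> q \<and> q \<le> nlv t"
proof (induction ts arbitrary: i)
  case Nil thus ?case by simp
next
  case (Cons t ts)
  show ?case
  proof (cases "i \<le> nlv t")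
    case True thus ?thesis using Cons.prems by (intro exI[of _ "[]"]) auto
  next
    case False
    have "\<exists>pre u post q. ts = pre @ u # post \<and> i - nlv t = nlvs pre + q \<and> 1 \<le> q \<and> q \<le> nlv u"
      using Cons.IH[of "i - nlv t"] Cons.prems False by auto
    then obtain pre u post q where "ts = pre @ u # post" "i - nlv t = nlvs pre + q" "1 \<le> q" "q \<le> nlv u"
      by blast
    thus ?thesis using False by (intro exI[of _ "t # pre"] exI[of _ u] exI[of _ post] exI[of _ q]) auto
  qed
qed

lemma graft_node: "ts = pre @ t # post \<Longrightarrow> i = nlvs pre + q \<Longrightarrow> 1 \<le> q \<Longrightarrow> q \<le> nlv t \<Longrightarrow>
   graft (Node x ts) i T = Node x (pre @ graft t q T # post)"
  by (simp add: gl_pre)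

lemma graft_leaf_slot: "graft (Node x (a @ Leaf # b)) (Suc (nlvs a)) t = Node x (a @ t # b)"
  using graft_node[of "a @ Leaf # b" a Leaf b "Suc (nlvs a)" 1 x t] by simp

lemma stree_graft: "stree C S \<Longrightarrow> stree C T \<Longrightarrow> 1 \<le> i \<Longrightarrow> i \<le> nlv S \<Longrightarrow> stree C (graft S i T)"
proof (induction S arbitrary: i)
  case Leaf thus ?case by simp
next
  case (Node x ts)
  obtain pre t post q where d: "ts = pre @ t # post" "i = nlvs pre + q" "1 \<le> q" "q \<le> nlv t"
    using idx_split[of i ts] Node.prems by auto
  have "stree C (graft t q T)" using Node d by auto
  moreover have "graft (Node x ts) i T = Node x (pre @ graft t q T # post)" by (rule graft_node[OF d])
  ultimately show ?case using Node.prems d by auto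
qed

lemma acl_walk: "1 \<le> q \<Longrightarrow> ac_comp_list C x (Suc (length pre)) pre (p @ rest) (nlvs p + q) T =
   ac_comp_list C x (Suc (length (pre @ p))) (pre @ p) rest q T"
proof (induction p arbitrary: pre)
  case Nil thus ?case by simp
next
  case (Cons a p)
  thus ?case using Cons.IH[of "pre @ [a]"] by simp
qed

inductive step :: "'a col_operad \<Rightarrow> 'a tree \<Rightarrow> 'a tree \<Rightarrow> bool" for C where
  root: "stree C (Node x (pre @ Node y vs # post)) \<Longrightarrow> outc C y = inc C x (Suc (length pre)) \<Longrightarrow>
     step C (Node x (pre @ Node y vs # post)) (Node (pcomp C x (Suc (length pre)) y) (pre @ vs @ post))"
| inside: "stree C (Node x (pre @ t # post)) \<Longrightarrow> step C t t' \<Longrightarrow>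
     step C (Node x (pre @ t # post)) (Node x (pre @ t' # post))"

lemma root': "S = Node x (pre @ Node y vs # post) \<Longrightarrow> stree C S \<Longrightarrow> outc C y = inc C x (Suc (length pre)) \<Longrightarrow>
   T = Node (pcomp C x (Suc (length pre)) y) (pre @ vs @ post) \<Longrightarrow> step C S T"
  using root[of C x pre y vs post] by simp

lemma inside': "S = Node x (pre @ t # post) \<Longrightarrow> stree C S \<Longrightarrow> step C t t' \<Longrightarrow>
   T = Node x (pre @ t' # post) \<Longrightarrow> step C S T"
  using inside[of C x pre t post t'] by simp

fun nn :: "'a tree \<Rightarrow> nat" where
  "nn Leaf = 0"
| "nn (Node x ts) = Suc (sum_list (map nn ts))"

lemma step_nn: "step C S T \<Longrightarrow> nn T < nn S"
  by (induction rule: step.induct) auto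

lemma step_leaf: "\<not> step C Leaf T"
  by (auto elim: step.cases)

locale colop =
  fixes k :: nat and C :: "'a col_operad"
  assumes op: "coloured_operad k C"
begin

lemma ax_comp:
  assumes "x \<in> elems C" "y \<in> elems C" "1 \<le> i" "i \<le> arity C x" "outc C y = inc C x i"
  shows "pcomp C x i y \<in> elems C" "arity C (pcomp C x i y) = arity C x + arity C y - 1"
    "outc C (pcomp C x i y) = outc C x"
    "\<And>p. 1 \<le> p \<Longrightarrow> p \<le> arity C x + arity C y - 1 \<Longrightarrow> inc C (pcomp C x i y) p =
       (if p < i then inc C x p else if p < i + arity C y then inc C y (p - i + 1) else inc C x (p - arity C y + 1))"
proof -
  have A: "\<forall>x\<in>elems C. \<forall>y\<in>elems C. \<forall>i\<in>{1..arity C x}. outc C y = inc C x i \<longrightarrow>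
        pcomp C x i y \<in> elems C \<and>
        arity C (pcomp C x i y) = arity C x + arity C y - 1 \<and>
        outc C (pcomp C x i y) = outc C x \<and>
        (\<forall>p\<in>{1..arity C x + arity C y - 1}.
           inc C (pcomp C x i y) p =
             (if p < i then inc C x p
              else if p < i + arity C y then inc C y (p - i + 1)
              else inc C x (p - arity C y + 1)))"
    using op unfolding coloured_operad_def apply (elim conjE) by assumption
  have B: "pcomp C x i y \<in> elems C \<and>
        arity C (pcomp C x i y) = arity C x + arity C y - 1 \<and>
        outc C (pcomp C x i y) = outc C x \<and>
        (\<forall>p\<in>{1..arity C x + arity C y - 1}.
           inc C (pcomp C x i y) p =
             (if p < i then inc C x p
              else if p < i + arity C y then inc C y (p - i + 1)
              else inc C x (p - arity C y + 1)))"
    using A assms by auto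
  thus "pcomp C x i y \<in> elems C" "arity C (pcomp C x i y) = arity C x + arity C y - 1"
    "outc C (pcomp C x i y) = outc C x" by auto
  show "\<And>p. 1 \<le> p \<Longrightarrow> p \<le> arity C x + arity C y - 1 \<Longrightarrow> inc C (pcomp C x i y) p =
       (if p < i then inc C x p else if p < i + arity C y then inc C y (p - i + 1) else inc C x (p - arity C y + 1))"
    using B by auto
qed

lemma ax_seq:
  assumes "x \<in> elems C" "y \<in> elems C" "z \<in> elems C" "1 \<le> i" "i \<le> arity C x" "1 \<le> j" "j \<le> arity C y"
    "outc C y = inc C x i" "outc C z = inc C y j"
  shows "pcomp C x i (pcomp C y j z) = pcomp C (pcomp C x i y) (i + j - 1) z"
proof -
  have "\<forall>x\<in>elems C. \<forall>y\<in>elems C. \<forall>z\<in>elems C. \<forall>i\<in>{1..arity C x}. \<forall>j\<in>{1..arity C y}.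
        outc C y = inc C x i \<longrightarrow> outc C z = inc C y j \<longrightarrow>
        pcomp C x i (pcomp C y j z) = pcomp C (pcomp C x i y) (i + j - 1) z"
    using op unfolding coloured_operad_def apply (elim conjE) by assumption
  thus ?thesis using assms by auto
qed

lemma ax_par:
  assumes "x \<in> elems C" "y \<in> elems C" "z \<in> elems C" "1 \<le> i" "i < j" "j \<le> arity C x"
    "outc C y = inc C x i" "outc C z = inc C x j"
  shows "pcomp C (pcomp C x i y) (j + arity C y - 1) z = pcomp C (pcomp C x j z) i y"
proof -
  have "\<forall>x\<in>elems C. \<forall>y\<in>elems C. \<forall>z\<in>elems C. \<forall>i j. 1 \<le> i \<longrightarrow> i < j \<longrightarrow> j \<le> arity C x \<longrightarrow>
        outc C y = inc C x i \<longrightarrow> outc C z = inc C x j \<longrightarrow>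
        pcomp C (pcomp C x i y) (j + arity C y - 1) z = pcomp C (pcomp C x j z) i y"
    using op unfolding coloured_operad_def apply (elim conjE) by assumption
  thus ?thesis using assms by auto
qed

lemma step_stree: "step C S T \<Longrightarrow> stree C S \<and> stree C T \<and> nlv T = nlv S"
proof (induction rule: step.induct)
  case (root x pre y vs post)
  have s: "x \<in> elems C" "y \<in> elems C" "arity C x = Suc (length pre + length post)"
     "arity C y = length vs" "2 \<le> arity C y" "\<forall>t\<in>set pre. stree C t" "\<forall>t\<in>set post. stree C t"
     "\<forall>t\<in>set vs. stree C t"
    using root(1) by auto
  have c: "pcomp C x (Suc (length pre)) y \<in> elems C"
    "arity C (pcomp C x (Suc (length pre)) y) = arity C x + arity C y - 1"
    using ax_comp[of x y "Suc (length pre)"] root(2) s by auto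
  have "stree C (Node (pcomp C x (Suc (length pre)) y) (pre @ vs @ post))"
    using c s by auto
  thus ?case using root(1) by simp
next
  case (inside x pre t post t')
  thus ?case by auto
qed


lemma all_leaf_repl: "\<forall>t\<in>set l. t = Leaf \<Longrightarrow> l = replicate (length l) Leaf"
  by (induction l) auto

lemma repl_split: "replicate a z @ z # replicate b z = replicate (Suc (a + b)) z"
  by (induction a) auto

lemma nlvs_repl: "nlvs (replicate n Leaf) = n"
  by (induction n) auto

lemma cong_slot: "env_eq C (Node x (a @ Leaf # b)) R0 \<Longrightarrow> R0 = Node x' (a' @ Leaf # b') \<Longrightarrow>
   nlvs a = nlvs a' \<Longrightarrow> stree C t \<Longrightarrow> env_eq C (Node x (a @ t # b)) (Node x' (a' @ t # b'))"
  using env_eq.cong[of C "Node x (a @ Leaf # b)" R0 t t "Suc (nlvs a)"] env_eq.refl[of C t]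
    graft_leaf_slot[of x a b t] graft_leaf_slot[of x' a' b' t] by auto

lemma cong_slot2: "env_eq C (Node x (p @ Node y (a @ Leaf # b) # q)) R0 \<Longrightarrow> R0 = Node x' (a' @ Leaf # b') \<Longrightarrow>
   nlvs p + nlvs a = nlvs a' \<Longrightarrow> stree C t \<Longrightarrow>
   env_eq C (Node x (p @ Node y (a @ t # b) # q)) (Node x' (a' @ t # b'))"
proof -
  assume h: "env_eq C (Node x (p @ Node y (a @ Leaf # b) # q)) R0" "R0 = Node x' (a' @ Leaf # b')"
    "nlvs p + nlvs a = nlvs a'" "stree C t"
  have g1: "graft (Node x (p @ Node y (a @ Leaf # b) # q)) (nlvs p + Suc (nlvs a)) t = Node x (p @ Node y (a @ t # b) # q)"
    using graft_node[of "p @ Node y (a @ Leaf # b) # q" p "Node y (a @ Leaf # b)" q "nlvs p + Suc (nlvs a)" "Suc (nlvs a)" x t]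
      graft_leaf_slot[of y a b t] by simp
  have g2: "graft R0 (nlvs p + Suc (nlvs a)) t = Node x' (a' @ t # b')"
    using h graft_leaf_slot[of x' a' b' t] by simp
  show ?thesis
    using env_eq.cong[OF h(1) env_eq.refl[OF h(4)], of "nlvs p + Suc (nlvs a)"] g1 g2 by simp
qed

lemma root_eq_aux: "\<forall>pre vs post. length (filter (\<lambda>t. t \<noteq> Leaf) (pre @ vs @ post)) = n \<longrightarrow>
   stree C (Node x (pre @ Node y vs # post)) \<longrightarrow> outc C y = inc C x (Suc (length pre)) \<longrightarrow>
   env_eq C (Node x (pre @ Node y vs # post)) (Node (pcomp C x (Suc (length pre)) y) (pre @ vs @ post))"
proof (induction n rule: less_induct)
  case (less n)
  show ?case
  proof (intro allI impI)
    fix pre vs post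
    assume n: "length (filter (\<lambda>t. t \<noteq> Leaf) (pre @ vs @ post)) = n"
      and st: "stree C (Node x (pre @ Node y vs # post))" and m: "outc C y = inc C x (Suc (length pre))"
    let ?z = "pcomp C x (Suc (length pre)) y"
    have s: "x \<in> elems C" "y \<in> elems C" "arity C x = Suc (length pre + length post)"
     "arity C y = length vs" "2 \<le> arity C y" "2 \<le> arity C x" "\<forall>t\<in>set pre. stree C t" "\<forall>t\<in>set post. stree C t"
     "\<forall>t\<in>set vs. stree C t"
      using st by auto
    show "env_eq C (Node x (pre @ Node y vs # post)) (Node ?z (pre @ vs @ post))"
    proof (cases "\<exists>t\<in>set (pre @ vs @ post). t \<noteq> Leaf")
      case False
      hence r: "pre = replicate (length pre) Leaf" "vs = replicate (length vs) Leaf" "post = replicate (length post) Leaf"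
        using all_leaf_repl by (metis Un_iff set_append)+
      have ar: "arity C ?z = length pre + length vs + length post"
        using ax_comp(2)[of x y "Suc (length pre)"] s m by simp
      have g: "graft (corolla C x) (Suc (length pre)) (corolla C y) = Node x (pre @ Node y vs # post)"
      proof -
        have "corolla C x = Node x (pre @ Leaf # post)"
          unfolding corolla_def using s(3) r repl_split[of "length pre" Leaf "length post"] by metis
        moreover have "nlvs pre = length pre" using r(1) nlvs_repl by metis
        ultimately show ?thesis using graft_leaf_slot[of x pre post "corolla C y"] r s(4)
          unfolding corolla_def by simp
      qed
      have c: "corolla C ?z = Node ?z (pre @ vs @ post)"
        unfolding corolla_def using ar r replicate_add[of "length pre" "length vs" Leaf] replicate_add[of "length pre + length vs" "length post" Leaf] by (metis append_assoc)
      have "env_eq C (graft (corolla C x) (Suc (length pre)) (corolla C y)) (corolla C ?z)"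
        by (rule env_eq.gen) (use s m in auto)
      thus ?thesis using g c by simp
    next
      case True
      then obtain t where t: "t \<in> set (pre @ vs @ post)" "t \<noteq> Leaf" by blast
      have stt: "stree C t" using t s by auto
      consider "t \<in> set pre" | "t \<in> set vs" | "t \<in> set post" using t by auto
      thus ?thesis
      proof cases
        case 1
        then obtain a b where ab: "pre = a @ t # b" by (meson split_list)
        have lt: "length (filter (\<lambda>t. t \<noteq> Leaf) ((a @ Leaf # b) @ vs @ post)) < n"
          using n ab t by simp
        have IH: "env_eq C (Node x ((a @ Leaf # b) @ Node y vs # post)) (Node ?z ((a @ Leaf # b) @ vs @ post))"
          using less[OF lt, rule_format, of "a @ Leaf # b" vs post] st m ab by auto
        show ?thesis using cong_slot[of x a "b @ Node y vs # post" _ ?z a "b @ vs @ post" t] stt IH ab by simp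
      next
        case 2
        then obtain a b where ab: "vs = a @ t # b" by (meson split_list)
        have lt: "length (filter (\<lambda>t. t \<noteq> Leaf) (pre @ (a @ Leaf # b) @ post)) < n"
          using n ab t by simp
        have IH: "env_eq C (Node x (pre @ Node y (a @ Leaf # b) # post)) (Node ?z (pre @ (a @ Leaf # b) @ post))"
          using less[OF lt, rule_format, of pre "a @ Leaf # b" post] st m ab by auto
        show ?thesis using cong_slot2[of x pre y a b post _ ?z "pre @ a" "b @ post" t] IH stt ab by simp
      next
        case 3
        then obtain a b where ab: "post = a @ t # b" by (meson split_list)
        have lt: "length (filter (\<lambda>t. t \<noteq> Leaf) (pre @ vs @ (a @ Leaf # b))) < n"
          using n ab t by simp
        have IH: "env_eq C (Node x (pre @ Node y vs # (a @ Leaf # b))) (Node ?z (pre @ vs @ (a @ Leaf # b)))"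
          using less[OF lt, rule_format, of pre vs "a @ Leaf # b"] st m ab by auto
        show ?thesis using cong_slot[of x "pre @ Node y vs # a" b _ ?z "pre @ vs @ a" b t] stt IH ab by simp
      qed
    qed
  qed
qed

lemma step_env_eq: "step C S T \<Longrightarrow> env_eq C S T"
proof (induction rule: step.induct)
  case (root x pre y vs post)
  thus ?case using root_eq_aux by blast
next
  case (inside x pre t post t')
  have st: "stree C (Node x (pre @ Leaf # post))" using inside(1) by auto
  show ?case
    using env_eq.cong[OF env_eq.refl[OF st] inside(3), of "Suc (nlvs pre)"]
      graft_leaf_slot[of x pre post t] graft_leaf_slot[of x pre post t'] by simp
qed

lemma steps_env_eq: "(step C)\<^sup>*\<^sup>* S T \<Longrightarrow> stree C S \<Longrightarrow> env_eq C S T"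
proof (induction rule: rtranclp_induct)
  case base thus ?case by (rule env_eq.refl)
next
  case (step T U) thus ?case using step_env_eq env_eq.trans by blast
qed


lemma lc_rr:
  assumes st: "stree C (Node x (p @ Node y1 v1 # m @ Node y2 v2 # q))"
    and m1: "outc C y1 = inc C x (Suc (length p))"
    and m2: "outc C y2 = inc C x (Suc (Suc (length p + length m)))"
  shows "\<exists>U. step C (Node (pcomp C x (Suc (length p)) y1) (p @ v1 @ m @ Node y2 v2 # q)) U \<and>
             step C (Node (pcomp C x (Suc (Suc (length p + length m))) y2) (p @ Node y1 v1 # m @ v2 @ q)) U"
proof -
  let ?j1 = "Suc (length p)"
  let ?j2 = "Suc (Suc (length p + length m))"
  have s: "x \<in> elems C" "y1 \<in> elems C" "y2 \<in> elems C" "arity C x = length p + length m + length q + 2"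
    "arity C y1 = length v1" "arity C y2 = length v2" "2 \<le> arity C y1" "2 \<le> arity C y2"
    using st by auto
  have S1: "step C (Node x (p @ Node y1 v1 # m @ Node y2 v2 # q)) (Node (pcomp C x ?j1 y1) (p @ v1 @ m @ Node y2 v2 # q))"
    by (rule root'[where x=x and pre=p and y=y1 and vs=v1 and post="m @ Node y2 v2 # q"]) (use st m1 in auto)
  have S2: "step C (Node x (p @ Node y1 v1 # m @ Node y2 v2 # q)) (Node (pcomp C x ?j2 y2) (p @ Node y1 v1 # m @ v2 @ q))"
    by (rule root'[where x=x and pre="p @ Node y1 v1 # m" and y=y2 and vs=v2 and post=q]) (use st m2 in auto)
  have st1: "stree C (Node (pcomp C x ?j1 y1) (p @ v1 @ m @ Node y2 v2 # q))" using step_stree[OF S1] by simp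
  have st2: "stree C (Node (pcomp C x ?j2 y2) (p @ Node y1 v1 # m @ v2 @ q))" using step_stree[OF S2] by simp
  have i1: "inc C (pcomp C x ?j1 y1) (Suc (length (p @ v1 @ m))) = inc C x ?j2"
    using ax_comp(4)[of x y1 ?j1 "Suc (length (p @ v1 @ m))"] s m1 by simp
  have i2: "inc C (pcomp C x ?j2 y2) ?j1 = inc C x ?j1"
    using ax_comp(4)[of x y2 ?j2 ?j1] s m2 by simp
  have par: "pcomp C (pcomp C x ?j1 y1) (?j2 + arity C y1 - 1) y2 = pcomp C (pcomp C x ?j2 y2) ?j1 y1"
    using ax_par[of x y1 y2 ?j1 ?j2] s m1 m2 by simp
  let ?U = "Node (pcomp C (pcomp C x ?j1 y1) (?j2 + arity C y1 - 1) y2) (p @ v1 @ m @ v2 @ q)"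
  have T1: "step C (Node (pcomp C x ?j1 y1) (p @ v1 @ m @ Node y2 v2 # q)) ?U"
    by (rule root'[where x="pcomp C x ?j1 y1" and pre="p @ v1 @ m" and y=y2 and vs=v2 and post=q])
       (use st1 i1 m2 s in \<open>auto simp: ac_simps\<close>)
  have T2: "step C (Node (pcomp C x ?j2 y2) (p @ Node y1 v1 # m @ v2 @ q)) ?U"
    by (rule root'[where x="pcomp C x ?j2 y2" and pre="p" and y=y1 and vs=v1 and post="m @ v2 @ q"])
       (use st2 i2 m1 par in auto)
  show ?thesis using T1 T2 by blast
qed

end

lemma split3: "a @ x # b = c @ y # d \<Longrightarrow> (a = c \<and> x = y \<and> b = d) \<or> (\<exists>m. c = a @ x # m \<and> b = m @ y # d)
   \<or> (\<exists>m. a = c @ y # m \<and> d = m @ x # b)"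
proof (induction a arbitrary: c)
  case Nil thus ?case by (cases c) auto
next
  case (Cons u a) thus ?case by (cases c) auto
qed

lemma step_inv: "step C S T \<Longrightarrow>
  (\<exists>x p y vs q. S = Node x (p @ Node y vs # q) \<and> stree C S \<and> outc C y = inc C x (Suc (length p)) \<and>
      T = Node (pcomp C x (Suc (length p)) y) (p @ vs @ q)) \<or>
  (\<exists>x p t q t'. S = Node x (p @ t # q) \<and> stree C S \<and> step C t t' \<and> T = Node x (p @ t' # q))"
  by (erule step.cases) (rule disjI1, blast, rule disjI2, blast)


context colop begin

lemma steps_lift: "(step C)\<^sup>*\<^sup>* t u \<Longrightarrow> stree C (Node x (p @ t # q)) \<Longrightarrow>
   (step C)\<^sup>*\<^sup>* (Node x (p @ t # q)) (Node x (p @ u # q)) \<and> stree C (Node x (p @ u # q))"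
proof (induction rule: rtranclp_induct)
  case base thus ?case by simp
next
  case (step u u')
  hence IH: "(step C)\<^sup>*\<^sup>* (Node x (p @ t # q)) (Node x (p @ u # q))" "stree C (Node x (p @ u # q))" by auto
  have s: "step C (Node x (p @ u # q)) (Node x (p @ u' # q))" by (rule inside[OF IH(2) step(2)])
  show ?case using IH s step_stree[OF s] by auto
qed



lemma lc_ri:
  assumes st: "stree C (Node x (p1 @ Node y vs # q1))"
    and m: "outc C y = inc C x (Suc (length p1))"
    and eq: "p1 @ Node y vs # q1 = p2 @ t # q2"
    and tt: "step C t t'"
  shows "\<exists>U. (step C)\<^sup>*\<^sup>* (Node (pcomp C x (Suc (length p1)) y) (p1 @ vs @ q1)) U \<and>
             (step C)\<^sup>*\<^sup>* (Node x (p2 @ t' # q2)) U"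
proof -
  let ?j = "Suc (length p1)"
  let ?z = "pcomp C x ?j y"
  have s: "x \<in> elems C" "y \<in> elems C" "arity C x = Suc (length p1 + length q1)"
    "arity C y = length vs" "2 \<le> arity C y"
    using st by auto
  have S1: "step C (Node x (p1 @ Node y vs # q1)) (Node ?z (p1 @ vs @ q1))"
    by (rule root[OF st m])
  have st1: "stree C (Node ?z (p1 @ vs @ q1))" using step_stree[OF S1] by simp
  have S2: "step C (Node x (p1 @ Node y vs # q1)) (Node x (p2 @ t' # q2))"
    using inside[of C x p2 t q2 t'] st eq tt by simp
  have st2: "stree C (Node x (p2 @ t' # q2))" using step_stree[OF S2] by simp
  from split3[OF eq] consider "p1 = p2" "Node y vs = t" "q1 = q2"
    | mm where "p2 = p1 @ Node y vs # mm" "q1 = mm @ t # q2"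
    | mm where "p1 = p2 @ t # mm" "q2 = mm @ Node y vs # q1" by blast
  thus ?thesis
  proof cases
    case 1
    from step_inv[OF tt[folded 1(2)]] show ?thesis
    proof (elim disjE exE conjE)
      fix y' p' z ws q'
      assume h: "Node y vs = Node y' (p' @ Node z ws # q')" "outc C z = inc C y' (Suc (length p'))"
        "t' = Node (pcomp C y' (Suc (length p')) z) (p' @ ws @ q')"
      hence h': "y' = y" "vs = p' @ Node z ws # q'" by auto
      let ?j' = "Suc (length p')"
      have sz: "z \<in> elems C" using st h' by auto
      have i1: "inc C ?z (Suc (length (p1 @ p'))) = inc C y ?j'"
        using ax_comp(4)[of x y ?j "Suc (length (p1 @ p'))"] s m h' by simp
      have sq: "pcomp C x ?j (pcomp C y ?j' z) = pcomp C ?z (?j + ?j' - 1) z"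
        using ax_seq[of x y z ?j ?j'] s m h h' sz by simp
      have o: "outc C (pcomp C y ?j' z) = outc C y"
        using ax_comp(3)[of y z ?j'] s h h' sz by simp
      let ?U = "Node (pcomp C x ?j (pcomp C y ?j' z)) (p1 @ p' @ ws @ q' @ q1)"
      have T1: "step C (Node ?z (p1 @ vs @ q1)) ?U"
        by (rule root'[where x="?z" and pre="p1 @ p'" and y=z and vs=ws and post="q' @ q1"])
          (use st1 h h' i1 sq in auto)
      have T2: "step C (Node x (p2 @ t' # q2)) ?U"
        by (rule root'[where x=x and pre=p1 and y="pcomp C y ?j' z" and vs="p' @ ws @ q'" and post=q1])
          (use st2 h h' 1 o m in auto)
      show ?thesis using T1 T2 by blast
    next
      fix y' p' v q' v'
      assume h: "Node y vs = Node y' (p' @ v # q')" "step C v v'" "t' = Node y' (p' @ v' # q')"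
      hence h': "y' = y" "vs = p' @ v # q'" by auto
      let ?U = "Node ?z (p1 @ p' @ v' # q' @ q1)"
      have T1: "step C (Node ?z (p1 @ vs @ q1)) ?U"
        by (rule inside'[where x="?z" and pre="p1 @ p'" and t=v and post="q' @ q1"])
          (use st1 h h' in auto)
      have T2: "step C (Node x (p2 @ t' # q2)) ?U"
        by (rule root'[where x=x and pre=p1 and y=y and vs="p' @ v' # q'" and post=q1])
          (use st2 h h' 1 m in auto)
      show ?thesis using T1 T2 by blast
    qed
  next
    case 2
    let ?U = "Node ?z (p1 @ vs @ mm @ t' # q2)"
    have T1: "step C (Node ?z (p1 @ vs @ q1)) ?U"
      by (rule inside'[where x="?z" and pre="p1 @ vs @ mm" and t=t and post="q2"])
        (use st1 tt 2 in auto)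
    have T2: "step C (Node x (p2 @ t' # q2)) ?U"
      by (rule root'[where x=x and pre=p1 and y=y and vs=vs and post="mm @ t' # q2"])
        (use st2 2 m in auto)
    show ?thesis using T1 T2 by blast
  next
    case 3
    let ?U = "Node ?z (p2 @ t' # mm @ vs @ q1)"
    have T1: "step C (Node ?z (p1 @ vs @ q1)) ?U"
      by (rule inside'[where x="?z" and pre="p2" and t=t and post="mm @ vs @ q1"])
        (use st1 tt 3 in auto)
    have T2: "step C (Node x (p2 @ t' # q2)) ?U"
      by (rule root'[where x=x and pre="p2 @ t' # mm" and y=y and vs=vs and post="q1"])
        (use st2 3 m in auto)
    show ?thesis using T1 T2 by blast
  qed
qed


lemma lc: "step C S T1 \<Longrightarrow> step C S T2 \<Longrightarrow> \<exists>U. (step C)\<^sup>*\<^sup>* T1 U \<and> (step C)\<^sup>*\<^sup>* T2 U"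
proof (induction arbitrary: T2 rule: step.induct)
  case (root x p1 y vs q1)
  from step_inv[OF root.prems] show ?case
  proof (elim disjE exE conjE)
    fix x' p2 y2 vs2 q2
    assume h: "Node x (p1 @ Node y vs # q1) = Node x' (p2 @ Node y2 vs2 # q2)"
      "outc C y2 = inc C x' (Suc (length p2))"
      "T2 = Node (pcomp C x' (Suc (length p2)) y2) (p2 @ vs2 @ q2)"
    hence e: "x' = x" "p1 @ Node y vs # q1 = p2 @ Node y2 vs2 # q2" by auto
    from split3[OF e(2)] consider "p1 = p2" "Node y vs = Node y2 vs2" "q1 = q2"
      | mm where "p2 = p1 @ Node y vs # mm" "q1 = mm @ Node y2 vs2 # q2"
      | mm where "p1 = p2 @ Node y2 vs2 # mm" "q2 = mm @ Node y vs # q1" by blast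
    thus ?thesis
    proof cases
      case 1 thus ?thesis using h e by auto
    next
      case 2
      have "\<exists>U. step C (Node (pcomp C x (Suc (length p1)) y) (p1 @ vs @ mm @ Node y2 vs2 # q2)) U \<and>
             step C (Node (pcomp C x (Suc (Suc (length p1 + length mm))) y2) (p1 @ Node y vs # mm @ vs2 @ q2)) U"
        by (rule lc_rr) (use root(1,2) h e 2 in auto)
      thus ?thesis using h e 2 by auto
    next
      case 3
      have "\<exists>U. step C (Node (pcomp C x (Suc (length p2)) y2) (p2 @ vs2 @ mm @ Node y vs # q1)) U \<and>
             step C (Node (pcomp C x (Suc (Suc (length p2 + length mm))) y) (p2 @ Node y2 vs2 # mm @ vs @ q1)) U"
        by (rule lc_rr) (use root(1,2) h e 3 in auto)
      thus ?thesis using h e 3 by auto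
    qed
  next
    fix x' p2 t q2 t'
    assume h: "Node x (p1 @ Node y vs # q1) = Node x' (p2 @ t # q2)" "step C t t'" "T2 = Node x' (p2 @ t' # q2)"
    thus ?thesis using lc_ri[OF root(1,2), of p2 t q2 t'] by auto
  qed
next
  case (inside x p1 t q1 t1)
  from step_inv[OF inside.prems] show ?case
  proof (elim disjE exE conjE)
    fix x' p2 y2 vs2 q2
    assume h: "Node x (p1 @ t # q1) = Node x' (p2 @ Node y2 vs2 # q2)"
      "outc C y2 = inc C x' (Suc (length p2))"
      "T2 = Node (pcomp C x' (Suc (length p2)) y2) (p2 @ vs2 @ q2)"
    hence e: "x' = x" "p2 @ Node y2 vs2 # q2 = p1 @ t # q1" by auto
    have st: "stree C (Node x (p2 @ Node y2 vs2 # q2))" using inside(1) e by simp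
    show ?thesis using lc_ri[OF st _ e(2) inside(2)] h e by blast
  next
    fix x' p2 t2 q2 t2'
    assume h: "Node x (p1 @ t # q1) = Node x' (p2 @ t2 # q2)" "step C t2 t2'" "T2 = Node x' (p2 @ t2' # q2)"
    hence e: "x' = x" "p1 @ t # q1 = p2 @ t2 # q2" by auto
    have st1: "stree C (Node x (p1 @ t1 # q1))" using step_stree[OF step.inside[OF inside(1,2)]] by simp
    from split3[OF e(2)] consider "p1 = p2" "t = t2" "q1 = q2"
      | mm where "p2 = p1 @ t # mm" "q1 = mm @ t2 # q2"
      | mm where "p1 = p2 @ t2 # mm" "q2 = mm @ t # q1" by blast
    thus ?thesis
    proof cases
      case 1
      then obtain U' where U': "(step C)\<^sup>*\<^sup>* t1 U'" "(step C)\<^sup>*\<^sup>* t2' U'"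
        using inside.IH h by blast
      have st2: "stree C (Node x (p1 @ t2' # q1))" using step_stree[OF step.inside[OF inside(1), of t2']] h 1 by simp
      show ?thesis using steps_lift[OF U'(1) st1] steps_lift[OF U'(2) st2] h e 1 by auto
    next
      case 2
      let ?U = "Node x (p1 @ t1 # mm @ t2' # q2)"
      have T1: "step C (Node x (p1 @ t1 # q1)) ?U"
        by (rule inside'[where x=x and pre="p1 @ t1 # mm" and t=t2 and post=q2]) (use st1 h 2 in auto)
      have st2: "stree C (Node x (p2 @ t2' # q2))"
        using step_stree[OF step.inside[of C x p2 t2 q2 t2']] inside(1) h e by simp
      have T2: "step C (Node x (p2 @ t2' # q2)) ?U"
        by (rule inside'[where x=x and pre="p1" and t=t and post="mm @ t2' # q2"]) (use st2 inside(2) 2 in auto)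
      show ?thesis using T1 T2 h e by blast
    next
      case 3
      let ?U = "Node x (p2 @ t2' # mm @ t1 # q1)"
      have T1: "step C (Node x (p1 @ t1 # q1)) ?U"
        by (rule inside'[where x=x and pre="p2" and t=t2 and post="mm @ t1 # q1"]) (use st1 h 3 in auto)
      have st2: "stree C (Node x (p2 @ t2' # q2))"
        using step_stree[OF step.inside[of C x p2 t2 q2 t2']] inside(1) h e by simp
      have T2: "step C (Node x (p2 @ t2' # q2)) ?U"
        by (rule inside'[where x=x and pre="p2 @ t2' # mm" and t=t and post="q1"]) (use st2 inside(2) 3 in auto)
      show ?thesis using T1 T2 h e by blast
    qed
  qed
qed

definition normal :: "'a tree \<Rightarrow> bool" where "normal S \<longleftrightarrow> (\<forall>T. \<not> step C S T)"

lemma nf_exists: "\<exists>N. (step C)\<^sup>*\<^sup>* S N \<and> normal N"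
proof (induction "nn S" arbitrary: S rule: less_induct)
  case less
  show ?case
  proof (cases "normal S")
    case True thus ?thesis by blast
  next
    case False
    then obtain T where T: "step C S T" unfolding normal_def by blast
    then obtain N where "(step C)\<^sup>*\<^sup>* T N" "normal N" using less step_nn by blast
    thus ?thesis using T converse_rtranclp_into_rtranclp by metis
  qed
qed

lemma nf_unique: "(step C)\<^sup>*\<^sup>* S N1 \<Longrightarrow> normal N1 \<Longrightarrow> (step C)\<^sup>*\<^sup>* S N2 \<Longrightarrow> normal N2 \<Longrightarrow> N1 = N2"
proof (induction "nn S" arbitrary: S N1 N2 rule: less_induct)
  case less
  show ?case
  proof (cases "S = N1")
    case True
    hence "normal S" using less by simp
    hence "S = N2" using less(4) unfolding normal_def by (metis converse_rtranclpE)
    thus ?thesis using True by simp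
  next
    case False
    then obtain S1 where S1: "step C S S1" "(step C)\<^sup>*\<^sup>* S1 N1" using less(2) by (metis converse_rtranclpE)
    have "S \<noteq> N2"
    proof
      assume "S = N2" thus False using S1(1) less(5) unfolding normal_def by blast
    qed
    then obtain S2 where S2: "step C S S2" "(step C)\<^sup>*\<^sup>* S2 N2" using less(4) by (metis converse_rtranclpE)
    obtain U where U: "(step C)\<^sup>*\<^sup>* S1 U" "(step C)\<^sup>*\<^sup>* S2 U" using lc[OF S1(1) S2(1)] by blast
    obtain N3 where N3: "(step C)\<^sup>*\<^sup>* U N3" "normal N3" using nf_exists by blast
    have "N1 = N3" using less(1)[OF step_nn[OF S1(1)] S1(2) less(3) rtranclp_trans[OF U(1) N3(1)] N3(2)] .
    moreover have "N2 = N3" using less(1)[OF step_nn[OF S2(1)] S2(2) less(5) rtranclp_trans[OF U(2) N3(1)] N3(2)] .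
    ultimately show ?thesis by simp
  qed
qed

definition nf :: "'a tree \<Rightarrow> 'a tree" where "nf S = (SOME N. (step C)\<^sup>*\<^sup>* S N \<and> normal N)"

lemma nf_prop: "(step C)\<^sup>*\<^sup>* S (nf S) \<and> normal (nf S)"
  unfolding nf_def using someI_ex[OF nf_exists] .

lemma nf_eqI: "(step C)\<^sup>*\<^sup>* S N \<Longrightarrow> normal N \<Longrightarrow> nf S = N"
  using nf_prop nf_unique by blast

lemma nf_steps: "(step C)\<^sup>*\<^sup>* S S' \<Longrightarrow> nf S = nf S'"
  using nf_prop[of S'] nf_eqI rtranclp_trans by metis


lemma steps_stree: "(step C)\<^sup>*\<^sup>* S S' \<Longrightarrow> stree C S \<Longrightarrow> stree C S' \<and> nlv S' = nlv S"
  by (induction rule: rtranclp_induct) (auto dest: step_stree)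

lemma split_idx: "(i::nat) \<le> a \<or> (\<exists>q. i = a + q \<and> 1 \<le> q \<and> q \<le> b) \<or> (\<exists>q. i = a + b + q \<and> 1 \<le> q)"
  by presburger

lemma graft_node_simp: "graft (Node x ts) i T = Node x (graft_list ts i T)" by simp

lemma graft_step1: "step C S S' \<Longrightarrow> stree C T \<Longrightarrow> 1 \<le> i \<Longrightarrow> i \<le> nlv S \<Longrightarrow>
   step C (graft S i T) (graft S' i T)"
proof (induction arbitrary: i rule: step.induct)
  case (root x pre y vs post)
  let ?z = "pcomp C x (Suc (length pre)) y"
  have stg: "stree C (graft (Node x (pre @ Node y vs # post)) i T)"
    using stree_graft[OF root(1) root.prems(1)] root.prems by simp
  consider "i \<le> nlvs pre" | q where "i = nlvs pre + q" "1 \<le> q" "q \<le> nlvs vs"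
    | q where "i = nlvs pre + nlvs vs + q" "1 \<le> q"
    using split_idx[of i "nlvs pre" "nlvs vs"] by blast
  thus ?case
  proof cases
    case 1
    have e1: "graft (Node x (pre @ Node y vs # post)) i T = Node x (graft_list pre i T @ Node y vs # post)"
      using gl_in[of i pre "Node y vs # post" T] root.prems 1 by simp
    have e2: "graft (Node ?z (pre @ vs @ post)) i T = Node ?z (graft_list pre i T @ vs @ post)"
      using gl_in[of i pre "vs @ post" T] root.prems 1 by simp
    show ?thesis unfolding e1 e2
      by (rule root'[where x=x and pre="graft_list pre i T" and y=y and vs=vs and post=post])
        (use stg e1 root(2) in \<open>auto simp: gl_len\<close>)
  next
    case 2
    have e1: "graft (Node x (pre @ Node y vs # post)) i T = Node x (pre @ Node y (graft_list vs q T) # post)"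
      using gl_pre[of q pre "Node y vs # post" T] 2 by simp
    have e2: "graft (Node ?z (pre @ vs @ post)) i T = Node ?z (pre @ graft_list vs q T @ post)"
      using gl_pre[of q pre "vs @ post" T] gl_in[of q vs post T] 2 by simp
    show ?thesis unfolding e1 e2
      by (rule root'[where x=x and pre="pre" and y=y and vs="graft_list vs q T" and post=post])
        (use stg e1 root(2) in \<open>auto simp: gl_len\<close>)
  next
    case 3
    have e1: "graft (Node x (pre @ Node y vs # post)) i T = Node x (pre @ Node y vs # graft_list post q T)"
      using gl_pre[of "nlvs vs + q" pre "Node y vs # post" T] 3 by (simp add: add.assoc)
    have e2: "graft (Node ?z (pre @ vs @ post)) i T = Node ?z (pre @ vs @ graft_list post q T)"
      using gl_pre[of q "pre @ vs" post T] 3 by simp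
    show ?thesis unfolding e1 e2
      by (rule root'[where x=x and pre="pre" and y=y and vs="vs" and post="graft_list post q T"])
        (use stg e1 root(2) in \<open>auto simp: gl_len\<close>)
  qed
next
  case (inside x pre t post t')
  have nt: "nlv t' = nlv t" using step_stree[OF inside(2)] by simp
  have stg: "stree C (graft (Node x (pre @ t # post)) i T)"
    using stree_graft[OF inside(1) inside.prems(1)] inside.prems by simp
  consider "i \<le> nlvs pre" | q where "i = nlvs pre + q" "1 \<le> q" "q \<le> nlv t"
    | q where "i = nlvs pre + nlv t + q" "1 \<le> q"
    using split_idx[of i "nlvs pre" "nlv t"] by blast
  thus ?case
  proof cases
    case 1
    have e1: "graft (Node x (pre @ t # post)) i T = Node x (graft_list pre i T @ t # post)"
      using gl_in[of i pre "t # post" T] inside.prems 1 by simp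
    have e2: "graft (Node x (pre @ t' # post)) i T = Node x (graft_list pre i T @ t' # post)"
      using gl_in[of i pre "t' # post" T] inside.prems 1 by simp
    show ?thesis unfolding e1 e2
      by (rule inside'[where x=x and pre="graft_list pre i T" and t=t and post=post])
        (use stg e1 inside(2) in auto)
  next
    case 2
    have e1: "graft (Node x (pre @ t # post)) i T = Node x (pre @ graft t q T # post)"
      using gl_pre[of q pre "t # post" T] 2 by simp
    have e2: "graft (Node x (pre @ t' # post)) i T = Node x (pre @ graft t' q T # post)"
      using gl_pre[of q pre "t' # post" T] 2 nt by simp
    show ?thesis unfolding e1 e2
      by (rule inside'[where x=x and pre="pre" and t="graft t q T" and post=post])
        (use stg e1 inside(3,4) 2 in auto)
  next
    case 3
    have e1: "graft (Node x (pre @ t # post)) i T = Node x (pre @ t # graft_list post q T)"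
      using gl_pre[of "nlv t + q" pre "t # post" T] 3 by (simp add: add.assoc)
    have e2: "graft (Node x (pre @ t' # post)) i T = Node x (pre @ t' # graft_list post q T)"
      using gl_pre[of "nlv t' + q" pre "t' # post" T] 3 nt by (simp add: add.assoc)
    show ?thesis unfolding e1 e2
      by (rule inside'[where x=x and pre="pre" and t=t and post="graft_list post q T"])
        (use stg e1 inside(2) in auto)
  qed
qed

lemma graft_step2: "step C T T' \<Longrightarrow> stree C S \<Longrightarrow> 1 \<le> i \<Longrightarrow> i \<le> nlv S \<Longrightarrow>
   step C (graft S i T) (graft S i T')"
proof (induction S arbitrary: i)
  case Leaf thus ?case by simp
next
  case (Node x ts)
  obtain pre t post q where d: "ts = pre @ t # post" "i = nlvs pre + q" "1 \<le> q" "q \<le> nlv t"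
    using idx_split[of i ts] Node.prems by auto
  have stT: "stree C T" using step_stree[OF Node.prems(1)] by simp
  have stg: "stree C (graft (Node x ts) i T)" using stree_graft[OF Node.prems(2) stT] Node.prems by simp
  have e1: "graft (Node x ts) i T = Node x (pre @ graft t q T # post)" by (rule graft_node[OF d])
  have e2: "graft (Node x ts) i T' = Node x (pre @ graft t q T' # post)" by (rule graft_node[OF d])
  have IH: "step C (graft t q T) (graft t q T')" using Node d by auto
  show ?case unfolding e1 e2 by (rule inside'[OF HOL.refl _ IH HOL.refl]) (use stg e1 in simp)
qed

lemma graft_steps1: "(step C)\<^sup>*\<^sup>* S S' \<Longrightarrow> stree C S \<Longrightarrow> stree C T \<Longrightarrow> 1 \<le> i \<Longrightarrow> i \<le> nlv S \<Longrightarrow>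
   (step C)\<^sup>*\<^sup>* (graft S i T) (graft S' i T)"
proof (induction rule: rtranclp_induct)
  case base thus ?case by simp
next
  case (step U U')
  have "nlv U = nlv S" using steps_stree[OF step(1,4)] by simp
  hence "step C (graft U i T) (graft U' i T)" using graft_step1[OF step(2) step(5,6)] step(7) by simp
  thus ?case using step by (meson rtranclp.rtrancl_into_rtrancl)
qed

lemma graft_steps2: "(step C)\<^sup>*\<^sup>* T T' \<Longrightarrow> stree C S \<Longrightarrow> 1 \<le> i \<Longrightarrow> i \<le> nlv S \<Longrightarrow>
   (step C)\<^sup>*\<^sup>* (graft S i T) (graft S i T')"
proof (induction rule: rtranclp_induct)
  case base thus ?case by simp
next
  case (step U U')
  thus ?case using graft_step2[OF step(2) step(4,5,6)] by (meson rtranclp.rtrancl_into_rtrancl)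
qed

lemma nlv_corolla: "nlv (corolla C x) = arity C x"
  unfolding corolla_def using nlvs_repl by simp

lemma gen_step:
  assumes "x \<in> elems C" "2 \<le> arity C x" "y \<in> elems C" "2 \<le> arity C y" "1 \<le> i" "i \<le> arity C x"
    "outc C y = inc C x i"
  shows "step C (graft (corolla C x) i (corolla C y)) (corolla C (pcomp C x i y))"
proof -
  let ?a = "replicate (i - 1) Leaf" and ?b = "replicate (arity C x - i) Leaf"
  have "?a @ Leaf # ?b = replicate (arity C x) Leaf"
    using repl_split[of "i - 1" Leaf "arity C x - i"] assms by simp
  hence cx: "corolla C x = Node x (?a @ Leaf # ?b)"
    unfolding corolla_def by metis
  have na: "nlvs ?a = i - 1" using nlvs_repl by metis
  have g: "graft (corolla C x) i (corolla C y) = Node x (?a @ corolla C y # ?b)"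
    using graft_leaf_slot[of x ?a ?b "corolla C y"] cx na assms by simp
  have ar: "arity C (pcomp C x i y) = arity C x + arity C y - 1" using ax_comp(2) assms by simp
  have cz: "corolla C (pcomp C x i y) = Node (pcomp C x i y) (?a @ replicate (arity C y) Leaf @ ?b)"
    unfolding corolla_def ar using assms by (simp add: replicate_add[symmetric])
  show ?thesis unfolding g cz
    by (rule root'[where x=x and pre="?a" and y=y and vs="replicate (arity C y) Leaf" and post="?b"])
      (use assms in \<open>auto simp: corolla_def\<close>)
qed

lemma env_eq_stree: "env_eq C S T \<Longrightarrow> stree C S \<and> stree C T \<and> nlv S = nlv T"
proof (induction rule: env_eq.induct)
  case (gen x y i)
  have s: "step C (graft (corolla C x) i (corolla C y)) (corolla C (pcomp C x i y))"
    using gen_step gen by auto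
  thus ?case using step_stree[OF s] by simp
next
  case (cong S S' T T' i)
  thus ?case using stree_graft[of C S T i] stree_graft[of C S' T' i] nlv_graft[of i S T] nlv_graft[of i S' T'] by auto
qed auto

lemma env_eq_nf: "env_eq C S T \<Longrightarrow> nf S = nf T"
proof (induction rule: env_eq.induct)
  case (gen x y i)
  thus ?case using gen_step[of x y i] nf_steps by auto
next
  case (cong S S' T T' i)
  have h: "stree C S" "stree C S'" "stree C T" "stree C T'" "nlv S = nlv S'"
    using env_eq_stree[OF cong(1)] env_eq_stree[OF cong(2)] by auto
  have r: "nf (graft A i B) = nf (graft (nf A) i (nf B))"
    if "stree C A" "stree C B" "1 \<le> i" "i \<le> nlv A" for A B
  proof -
    have a: "stree C (nf A)" "nlv (nf A) = nlv A" using steps_stree[OF conjunct1[OF nf_prop] that(1)] by auto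
    have "(step C)\<^sup>*\<^sup>* (graft A i B) (graft (nf A) i B)"
      using graft_steps1[OF conjunct1[OF nf_prop] that] .
    moreover have "(step C)\<^sup>*\<^sup>* (graft (nf A) i B) (graft (nf A) i (nf B))"
      using graft_steps2[OF conjunct1[OF nf_prop] a(1) that(3)] a(2) that(4) by simp
    ultimately show ?thesis using nf_steps rtranclp_trans by metis
  qed
  show ?case using r[of S T] r[of S' T'] h cong by auto
qed auto


lemma anticol_stree: "anticol C S \<Longrightarrow> stree C S"
  by (induction S) auto

lemma anticol_colD: "anticol C (Node x ts) \<Longrightarrow> j < length ts \<Longrightarrow> ts ! j = Node y us \<Longrightarrow> inc C x (Suc j) \<noteq> outc C y"
  unfolding anticol.simps by (metis Suc_eq_plus1)

lemma anticol_normal: "anticol C S \<Longrightarrow> normal S"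
proof -
  have "step C S T \<Longrightarrow> anticol C S \<Longrightarrow> False" for T
  proof (induction rule: step.induct)
    case (root x pre y vs post)
    thus ?case using anticol_colD[OF root.prems, of "length pre" y vs] by simp
  next
    case (inside x pre t post t')
    thus ?case by auto
  qed
  thus "anticol C S \<Longrightarrow> normal S" unfolding normal_def by blast
qed

lemma normal_anticol: "stree C S \<Longrightarrow> normal S \<Longrightarrow> anticol C S"
proof (induction S)
  case Leaf thus ?case by simp
next
  case (Node x ts)
  have ch: "anticol C t" if tin: "t \<in> set ts" for t
  proof -
    obtain a b where ab: "ts = a @ t # b" using split_list[OF tin] by blast
    have "normal t" unfolding normal_def
    proof (intro allI notI)
      fix t' assume "step C t t'"
      hence "step C (Node x ts) (Node x (a @ t' # b))" using inside[of C x a t b t'] Node.prems ab by simp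
      thus False using Node.prems(2) unfolding normal_def by blast
    qed
    thus ?thesis using Node.IH[OF tin] Node.prems(1) tin by auto
  qed
  have col: "inc C x (j + 1) \<noteq> outc C y" if "j < length ts" "ts ! j = Node y us" for j y us
  proof
    assume m: "inc C x (j + 1) = outc C y"
    have d: "ts = take j ts @ Node y us # drop (Suc j) ts" using that id_take_nth_drop by metis
    have "length (take j ts) = j" using that by simp
    hence "step C (Node x ts) (Node (pcomp C x (Suc j) y) (take j ts @ us @ drop (Suc j) ts))"
      using root[of C x "take j ts" y us "drop (Suc j) ts"] Node.prems(1) d m by simp
    thus False using Node.prems(2) unfolding normal_def by blast
  qed
  show ?case using ch col Node.prems(1) by auto
qed

fun acl :: "'a \<Rightarrow> nat \<Rightarrow> 'a tree list \<Rightarrow> bool" where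
  "acl x j [] = True"
| "acl x j (t # ts) = (anticol C t \<and> (\<forall>y us. t = Node y us \<longrightarrow> inc C x j \<noteq> outc C y) \<and> acl x (Suc j) ts)"

lemma acl_nth: "acl x j ts \<longleftrightarrow> (\<forall>k<length ts. anticol C (ts!k) \<and> (\<forall>y us. ts!k = Node y us \<longrightarrow> inc C x (j+k) \<noteq> outc C y))"
  by (induction ts arbitrary: j) (auto simp: All_less_Suc2)

lemma anticol_node: "anticol C (Node x ts) \<longleftrightarrow> x \<in> elems C \<and> 2 \<le> arity C x \<and> length ts = arity C x \<and> acl x 1 ts"
  unfolding acl_nth by (auto simp: all_set_conv_all_nth)

lemma acl_append: "acl x j (a @ b) \<longleftrightarrow> acl x j a \<and> acl x (j + length a) b"
  by (induction a arbitrary: j) auto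

lemma acl_cong: "(\<And>k. k < length ts \<Longrightarrow> inc C x (j+k) = inc C x' (j'+k)) \<Longrightarrow> acl x j ts = acl x' j' ts"
proof (induction ts arbitrary: j j')
  case Nil thus ?case by simp
next
  case (Cons t ts)
  have "inc C x j = inc C x' j'" using Cons.prems[of 0] by simp
  moreover have "acl x (Suc j) ts = acl x' (Suc j') ts"
    using Cons.IH[of "Suc j" "Suc j'"] Cons.prems[of "Suc k" for k] by simp
  ultimately show ?case by simp
qed

lemma acl_merge:
  assumes "x \<in> elems C" "y \<in> elems C" "arity C x = Suc (length p + length post)" "arity C y = length us"
    "outc C y = inc C x (Suc (length p))"
    "acl x 1 p" "acl y 1 us" "acl x (Suc (Suc (length p))) post"
  shows "acl (pcomp C x (Suc (length p)) y) 1 (p @ us @ post)"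
proof -
  let ?z = "pcomp C x (Suc (length p)) y"
  have "acl ?z 1 p = acl x 1 p"
    by (rule acl_cong) (use ax_comp(4)[of x y "Suc (length p)"] assms in auto)
  moreover have "acl ?z (1 + length p) us = acl y 1 us"
    by (rule acl_cong) (use ax_comp(4)[of x y "Suc (length p)"] assms in auto)
  moreover have "acl ?z (1 + length p + length us) post = acl x (Suc (Suc (length p))) post"
    by (rule acl_cong) (use ax_comp(4)[of x y "Suc (length p)"] assms in auto)
  ultimately show ?thesis using assms by (simp add: acl_append)
qed


lemma ac_main: "anticol C A \<Longrightarrow> anticol C B \<Longrightarrow> 1 \<le> i \<Longrightarrow> i \<le> nlv A \<Longrightarrow>
   (step C)\<^sup>*\<^sup>* (graft A i B) (ac_comp C A i B) \<and> anticol C (ac_comp C A i B) \<and>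
   (\<forall>z us. A = Node z us \<longrightarrow> (\<exists>z' us'. ac_comp C A i B = Node z' us' \<and> outc C z' = outc C z))"
proof (induction A arbitrary: i)
  case Leaf thus ?case by simp
next
  case (Node x ts)
  obtain p t post q where d: "ts = p @ t # post" "i = nlvs p + q" "1 \<le> q" "q \<le> nlv t"
    using idx_split[of i ts] Node.prems by auto
  let ?j = "Suc (length p)"
  have A: "x \<in> elems C" "2 \<le> arity C x" "arity C x = Suc (length p + length post)"
    "acl x 1 p" "anticol C t" "\<forall>y us. t = Node y us \<longrightarrow> inc C x ?j \<noteq> outc C y"
    "acl x (Suc (Suc (length p))) post"
    using Node.prems(1) d unfolding anticol_node by (auto simp: acl_append)
  have stA: "stree C (Node x ts)" using anticol_stree Node.prems(1) by blast
  have stB: "stree C B" using anticol_stree Node.prems(2) by blast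
  have stg: "stree C (graft (Node x ts) i B)" using stree_graft[OF stA stB] Node.prems by simp
  have ag: "graft (Node x ts) i B = Node x (p @ graft t q B # post)" by (rule graft_node[OF d])
  have ac: "ac_comp C (Node x ts) i B = ac_comp_list C x (Suc (length p)) p (t # post) q B"
    using acl_walk[where pre="[]" and p=p and rest="t # post" and T=B and x=x and C=C and q=q] d by simp
  show ?case
  proof (cases t)
    case Leaf
    have q1: "q = 1" using d Leaf by simp
    show ?thesis
    proof (cases B)
      case Leaf
      thus ?thesis using ac ag q1 \<open>t = Leaf\<close> d Node.prems(1) by simp
    next
      case (Node y us)
      have B: "y \<in> elems C" "2 \<le> arity C y" "arity C y = length us" "acl y 1 us"
        using Node.prems(2)[unfolded Node] unfolding anticol_node by auto
      show ?thesis
      proof (cases "outc C y = inc C x ?j")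
        case True
        let ?z = "pcomp C x ?j y"
        have e: "ac_comp C (Node x ts) i B = Node ?z (p @ us @ post)"
          using ac q1 \<open>t = Leaf\<close> Node True by simp
        have g: "graft (Node x ts) i B = Node x (p @ Node y us # post)" using ag q1 \<open>t = Leaf\<close> Node by simp
        have st: "step C (graft (Node x ts) i B) (ac_comp C (Node x ts) i B)"
          unfolding e g by (rule root) (use stg g True in auto)
        have c: "?z \<in> elems C" "arity C ?z = arity C x + arity C y - 1" "outc C ?z = outc C x"
          using ax_comp[of x y ?j] A B True by auto
        have "acl ?z 1 (p @ us @ post)" by (rule acl_merge) (use A B True in auto)
        hence "anticol C (Node ?z (p @ us @ post))" using c A B unfolding anticol_node by auto
        thus ?thesis using st e c by auto
      next
        case False
        have e: "ac_comp C (Node x ts) i B = Node x (p @ B # post)"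
          using ac q1 \<open>t = Leaf\<close> Node False by simp
        have g: "graft (Node x ts) i B = Node x (p @ B # post)" using ag q1 \<open>t = Leaf\<close> by simp
        have "acl x 1 (p @ B # post)" using A False Node.prems(2) Node by (simp add: acl_append)
        hence "anticol C (Node x (p @ B # post))" using A unfolding anticol_node by auto
        thus ?thesis using e g by auto
      qed
    qed
  next
    case (Node z vs)
    have e: "ac_comp C (Node x ts) i B = Node x (p @ ac_comp C t q B # post)"
      using ac Node d by simp
    have IH: "(step C)\<^sup>*\<^sup>* (graft t q B) (ac_comp C t q B)" "anticol C (ac_comp C t q B)"
      "\<exists>z' us'. ac_comp C t q B = Node z' us' \<and> outc C z' = outc C z"
      using Node.IH[of t q] d A(5) Node.prems(2) Node by auto
    have s: "(step C)\<^sup>*\<^sup>* (graft (Node x ts) i B) (ac_comp C (Node x ts) i B)"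
      unfolding ag e using steps_lift[OF IH(1)] stg ag by auto
    have "acl x 1 (p @ ac_comp C t q B # post)"
      using A IH(2,3) Node by (auto simp: acl_append)
    hence "anticol C (Node x (p @ ac_comp C t q B # post))" using A unfolding anticol_node by auto
    thus ?thesis using s e by auto
  qed
qed

end

theorem proposition1p1:
  fixes k :: nat and C :: "'a col_operad"
  assumes "coloured_operad k C"
  shows "\<exists>\<phi>. bij_betw \<phi> (Env C) (AC C) \<and>
           (\<forall>X\<in>Env C. \<phi> X \<in> X \<and> (\<forall>T\<in>X. anticol C T \<longrightarrow> T = \<phi> X)) \<and>
           \<phi> (env_class C Leaf) = Leaf \<and>
           (\<forall>S. stree C S \<longrightarrow> nlv (\<phi> (env_class C S)) = nlv S) \<and>
           (\<forall>S T i. stree C S \<longrightarrow> stree C T \<longrightarrow> i \<in> {1..nlv S} \<longrightarrow>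
              \<phi> (env_class C (graft S i T)) =
                ac_comp C (\<phi> (env_class C S)) i (\<phi> (env_class C T)))"
proof -
  interpret colop k C by unfold_locales (rule assms)
  define \<phi> where "\<phi> X = nf (SOME S. S \<in> X)" for X
  have mem: "S \<in> env_class C S" if "stree C S" for S
    unfolding env_class_def using env_eq.refl[OF that] by simp
  have phi: "\<phi> (env_class C S) = nf S" if "stree C S" for S
  proof -
    have "(SOME S'. S' \<in> env_class C S) \<in> env_class C S" using mem[OF that] by (rule someI)
    hence "env_eq C S (SOME S'. S' \<in> env_class C S)" unfolding env_class_def by simp
    thus ?thesis unfolding \<phi>_def using env_eq_nf by metis
  qed
  have nfp: "anticol C (nf S) \<and> env_eq C S (nf S) \<and> nlv (nf S) = nlv S \<and> stree C (nf S)" if "stree C S" for S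
  proof -
    have "stree C (nf S)" "nlv (nf S) = nlv S" using steps_stree[OF conjunct1[OF nf_prop] that] by auto
    moreover have "anticol C (nf S)" using normal_anticol[OF \<open>stree C (nf S)\<close>] nf_prop by blast
    moreover have "env_eq C S (nf S)" using steps_env_eq[OF conjunct1[OF nf_prop] that] .
    ultimately show ?thesis by blast
  qed
  have nfac: "nf T = T" if "anticol C T" for T
    using nf_eqI[OF rtranclp.rtrancl_refl anticol_normal[OF that]] .
  have cls: "env_class C S = env_class C S'" if "env_eq C S S'" for S S'
    unfolding env_class_def using that env_eq.sym env_eq.trans by blast
  have inj: "inj_on \<phi> (Env C)"
  proof (rule inj_onI)
    fix X Y assume X: "X \<in> Env C" and Y: "Y \<in> Env C" and e: "\<phi> X = \<phi> Y"
    obtain S where S: "stree C S" "X = env_class C S" using X unfolding Env_def by blast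
    obtain S' where S': "stree C S'" "Y = env_class C S'" using Y unfolding Env_def by blast
    have "nf S = nf S'" using e phi S S' by simp
    hence "env_eq C S S'" using nfp[OF S(1)] nfp[OF S'(1)] env_eq.sym env_eq.trans by metis
    thus "X = Y" using cls S S' by simp
  qed
  have img: "\<phi> ` Env C = AC C"
  proof
    show "\<phi> ` Env C \<subseteq> AC C" unfolding Env_def AC_def using phi nfp by auto
  next
    show "AC C \<subseteq> \<phi> ` Env C"
    proof
      fix T assume "T \<in> AC C"
      hence T: "anticol C T" unfolding AC_def by simp
      hence st: "stree C T" by (rule anticol_stree)
      have "T = \<phi> (env_class C T)" using phi[OF st] nfac[OF T] by simp
      thus "T \<in> \<phi> ` Env C" unfolding Env_def using st by blast
    qed
  qed
  have P2: "\<forall>X\<in>Env C. \<phi> X \<in> X \<and> (\<forall>T\<in>X. anticol C T \<longrightarrow> T = \<phi> X)"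
  proof
    fix X assume "X \<in> Env C"
    then obtain S where S: "stree C S" "X = env_class C S" unfolding Env_def by blast
    have "\<phi> X \<in> X" using S phi nfp unfolding env_class_def by auto
    moreover have "T = \<phi> X" if "T \<in> X" "anticol C T" for T
    proof -
      have "env_eq C S T" using that S unfolding env_class_def by simp
      hence "nf S = nf T" by (rule env_eq_nf)
      thus ?thesis using nfac[OF that(2)] phi S by simp
    qed
    ultimately show "\<phi> X \<in> X \<and> (\<forall>T\<in>X. anticol C T \<longrightarrow> T = \<phi> X)" by blast
  qed
  have P3: "\<phi> (env_class C Leaf) = Leaf" using phi[of Leaf] nfac[of Leaf] by simp
  have P4: "\<forall>S. stree C S \<longrightarrow> nlv (\<phi> (env_class C S)) = nlv S" using phi nfp by simp
  have P5: "\<phi> (env_class C (graft S i T)) = ac_comp C (\<phi> (env_class C S)) i (\<phi> (env_class C T))"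
    if h: "stree C S" "stree C T" "i \<in> {1..nlv S}" for S T i
  proof -
    have a: "anticol C (nf S)" "nlv (nf S) = nlv S" "stree C (nf S)" "anticol C (nf T)"
      using nfp h by auto
    have "(step C)\<^sup>*\<^sup>* (graft S i T) (graft (nf S) i T)"
      using graft_steps1[OF conjunct1[OF nf_prop] h(1,2)] h(3) by simp
    moreover have "(step C)\<^sup>*\<^sup>* (graft (nf S) i T) (graft (nf S) i (nf T))"
      using graft_steps2[OF conjunct1[OF nf_prop] a(3)] a(2) h(3) by simp
    moreover have "(step C)\<^sup>*\<^sup>* (graft (nf S) i (nf T)) (ac_comp C (nf S) i (nf T))"
      "anticol C (ac_comp C (nf S) i (nf T))"
      using ac_main[OF a(1) a(4)] a(2) h(3) by auto
    ultimately have "nf (graft S i T) = ac_comp C (nf S) i (nf T)"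
      using nf_steps nfac rtranclp_trans by metis
    moreover have "stree C (graft S i T)" using stree_graft[OF h(1,2)] h(3) by simp
    ultimately show ?thesis using phi h by simp
  qed
  show ?thesis
    by (rule exI[of _ \<phi>]) (use inj img P2 P3 P4 P5 in \<open>auto simp: bij_betw_def\<close>)
qed

end
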